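(* Assume $n_i(1)+n_i(0)>0$ for every link $i$. A point $\xi\in\Xi$ satisfies $\partial L(\xi)/\partial\xi=0$ if and only if, for every link $i\in E$, $$\xi_i=(1-r_i)+r_i\cdot\mathbf 1(i\notin\mathscr S)\cdot\prod_{j\in B_i}\xi_j .$$ In particular $\xi_i=1-r_i$ for $i\in\mathscr S$, and for a non-root link $i$, $\pi_i:=\prod_{j\in B_i}\xi_j$ satisfies $\pi_i=\prod_{j\in B_i}\big[(1-r_j)+r_j\pi_i\big]$.
   Context: Network: a finite set of directed links $E=\{1,\dots,m\}$ between nodes, forming a directed acyclic graph. For a link $i$, $C_i$ is the set of links whose tail is the head of $i$ (child links); $B_i$ is the set of links having the same tail as $i$ (brother links, including $i$ itself); $F_i$ is the set of links whose head is the tail of $i$ (parent links). A link $i$ is a leaf link if $C_i=\emptyset$; $R_i$ is the set of leaf links that are descendants of $i$ (including $i$ itself if $i$ is a leaf). The network is covered by $K\ge1$ multicast trees $T_1,\dots,T_K$: $T_k$ has a root link $S_k$ whose tail is a source node with no incoming link ($F_{S_k}=\emptyset$); its link set $E_k$ consists of $S_k$ and all descendants of $S_k$; every link $i\in E_k\setminus\{S_k\}$ has exactly one parent link in $E_k$, denoted $f^{(k)}_i\in F_i\cap E_k$; every link belongs to some $E_k$; each root link $S_k$ belongs only to $E_k$. $\mathscr S=\{S_1,\dots,S_K\}$. Loss model: each link $i$ has loss rate $\theta_i\in(0,1)$. From the source of tree $T_k$, $n_k$ probes are sent; $X^{(k,t)}_i=1$ if probe $t$ of tree $k$ reached the head of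 link $i\in E_k$; a probe at the tail of link $i$ traverses it with probability $1-\theta_i$, independently across links, probes and trees; only leaf links are observed. Internal views: $Y^{(k,t)}_i=\max_{r\in R_i}X^{(k,t)}_r$ for $i\in E_k$; $n_{k,i}(1)=\sum_{t=1}^{n_k}Y^{(k,t)}_i$ for $i\in E_k$ and $0$ otherwise; $n_{k,S_k}(0)=n_k-n_{k,S_k}(1)$, $n_{k,i}(0)=n_{k,f^{(k)}_i}(1)-n_{k,i}(1)$ for $i\in E_k\setminus\{S_k\}$, and $0$ for $i\notin E_k$; $n_i(1)=\sum_k n_{k,i}(1)$, $n_i(0)=\sum_k n_{k,i}(0)$; $r_i=n_i(1)/(n_i(1)+n_i(0))$. $\Xi$ is the set of $\xi\in(0,1)^m$ with $\xi_i>\prod_{j\in C_i}\xi_j$ for every non-leaf link $i$, and the log-likelihood of the observed data in terms of $\xi\in\Xi$ is $L(\xi)=\sum_{i\in E}\big[n_i(1)\log\frac{1-\xi_i}{1-\prod_{j\in C_i}\xi_j}+n_i(0)\log\xi_i\big]$, with the empty product over $C_i=\emptyset$ equal to $0$. *)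

theory Defs
  imports Complex_Main
begin

definition children :: "'a set \<Rightarrow> ('a \<Rightarrow> 'v) \<Rightarrow> ('a \<Rightarrow> 'v) \<Rightarrow> 'a \<Rightarrow> 'a set" where
  "children E tail head i = {j \<in> E. tail j = head i}"

definition brothers :: "'a set \<Rightarrow> ('a \<Rightarrow> 'v) \<Rightarrow> 'a \<Rightarrow> 'a set" where
  "brothers E tail i = {j \<in> E. tail j = tail i}"

definition parents :: "'a set \<Rightarrow> ('a \<Rightarrow> 'v) \<Rightarrow> ('a \<Rightarrow> 'v) \<Rightarrow> 'a \<Rightarrow> 'a set" where
  "parents E tail head i = {j \<in> E. head j = tail i}"

definition child_rel :: "'a set \<Rightarrow> ('a \<Rightarrow> 'v) \<Rightarrow> ('a \<Rightarrow> 'v) \<Rightarrow> ('a \<times> 'a) set" where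
  "child_rel E tail head = {(i, j). i \<in> E \<and> j \<in> children E tail head i}"

definition leaf_desc :: "'a set \<Rightarrow> ('a \<Rightarrow> 'v) \<Rightarrow> ('a \<Rightarrow> 'v) \<Rightarrow> 'a \<Rightarrow> 'a set" where
  "leaf_desc E tail head i =
     {r \<in> E. (i, r) \<in> (child_rel E tail head)\<^sup>* \<and> children E tail head r = {}}"

definition tree_links :: "'a set \<Rightarrow> ('a \<Rightarrow> 'v) \<Rightarrow> ('a \<Rightarrow> 'v) \<Rightarrow> (nat \<Rightarrow> 'a) \<Rightarrow> nat \<Rightarrow> 'a set" where
  "tree_links E tail head S k = {j. (S k, j) \<in> (child_rel E tail head)\<^sup>*}"

definition tree_parent :: "'a set \<Rightarrow> ('a \<Rightarrow> 'v) \<Rightarrow> ('a \<Rightarrow> 'v) \<Rightarrow> (nat \<Rightarrow> 'a) \<Rightarrow> nat \<Rightarrow> 'a \<Rightarrow> 'a" where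
  "tree_parent E tail head S k i = (THE p. p \<in> parents E tail head i \<inter> tree_links E tail head S k)"

definition multicast_cover :: "'a set \<Rightarrow> ('a \<Rightarrow> 'v) \<Rightarrow> ('a \<Rightarrow> 'v) \<Rightarrow> nat \<Rightarrow> (nat \<Rightarrow> 'a) \<Rightarrow> bool" where
  "multicast_cover E tail head K S \<longleftrightarrow>
     finite E \<and> acyclic (child_rel E tail head) \<and> K \<ge> 1 \<and>
     (\<forall>k \<in> {1..K}. S k \<in> E \<and> parents E tail head (S k) = {}) \<and>
     (\<forall>k \<in> {1..K}. \<forall>i \<in> tree_links E tail head S k - {S k}.
        \<exists>!p. p \<in> parents E tail head i \<inter> tree_links E tail head S k) \<and>
     (\<forall>i \<in> E. \<exists>k \<in> {1..K}. i \<in> tree_links E tail head S k) \<and>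
     (\<forall>k \<in> {1..K}. \<forall>l \<in> {1..K}. S k \<in> tree_links E tail head S l \<longrightarrow> l = k)"

text \<open>X k t r: probe t of tree k reached the head of (leaf) link r. np k = n_k.\<close>

definition Yview :: "'a set \<Rightarrow> ('a \<Rightarrow> 'v) \<Rightarrow> ('a \<Rightarrow> 'v) \<Rightarrow> (nat \<Rightarrow> nat \<Rightarrow> 'a \<Rightarrow> bool)
    \<Rightarrow> nat \<Rightarrow> nat \<Rightarrow> 'a \<Rightarrow> bool" where
  "Yview E tail head X k t i = (\<exists>r \<in> leaf_desc E tail head i. X k t r)"

definition cnt1 :: "'a set \<Rightarrow> ('a \<Rightarrow> 'v) \<Rightarrow> ('a \<Rightarrow> 'v) \<Rightarrow> (nat \<Rightarrow> 'a) \<Rightarrow> (nat \<Rightarrow> nat)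
    \<Rightarrow> (nat \<Rightarrow> nat \<Rightarrow> 'a \<Rightarrow> bool) \<Rightarrow> nat \<Rightarrow> 'a \<Rightarrow> real" where
  "cnt1 E tail head S np X k i =
     (if i \<in> tree_links E tail head S k
      then real (card {t. t < np k \<and> Yview E tail head X k t i}) else 0)"

definition cnt0 :: "'a set \<Rightarrow> ('a \<Rightarrow> 'v) \<Rightarrow> ('a \<Rightarrow> 'v) \<Rightarrow> (nat \<Rightarrow> 'a) \<Rightarrow> (nat \<Rightarrow> nat)
    \<Rightarrow> (nat \<Rightarrow> nat \<Rightarrow> 'a \<Rightarrow> bool) \<Rightarrow> nat \<Rightarrow> 'a \<Rightarrow> real" where
  "cnt0 E tail head S np X k i =
     (if i \<notin> tree_links E tail head S k then 0
      else if i = S k then real (np k) - cnt1 E tail head S np X k i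
      else cnt1 E tail head S np X k (tree_parent E tail head S k i) - cnt1 E tail head S np X k i)"

definition N1 :: "'a set \<Rightarrow> ('a \<Rightarrow> 'v) \<Rightarrow> ('a \<Rightarrow> 'v) \<Rightarrow> nat \<Rightarrow> (nat \<Rightarrow> 'a) \<Rightarrow> (nat \<Rightarrow> nat)
    \<Rightarrow> (nat \<Rightarrow> nat \<Rightarrow> 'a \<Rightarrow> bool) \<Rightarrow> 'a \<Rightarrow> real" where
  "N1 E tail head K S np X i = (\<Sum>k \<in> {1..K}. cnt1 E tail head S np X k i)"

definition N0 :: "'a set \<Rightarrow> ('a \<Rightarrow> 'v) \<Rightarrow> ('a \<Rightarrow> 'v) \<Rightarrow> nat \<Rightarrow> (nat \<Rightarrow> 'a) \<Rightarrow> (nat \<Rightarrow> nat)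
    \<Rightarrow> (nat \<Rightarrow> nat \<Rightarrow> 'a \<Rightarrow> bool) \<Rightarrow> 'a \<Rightarrow> real" where
  "N0 E tail head K S np X i = (\<Sum>k \<in> {1..K}. cnt0 E tail head S np X k i)"

definition rr :: "'a set \<Rightarrow> ('a \<Rightarrow> 'v) \<Rightarrow> ('a \<Rightarrow> 'v) \<Rightarrow> nat \<Rightarrow> (nat \<Rightarrow> 'a) \<Rightarrow> (nat \<Rightarrow> nat)
    \<Rightarrow> (nat \<Rightarrow> nat \<Rightarrow> 'a \<Rightarrow> bool) \<Rightarrow> 'a \<Rightarrow> real" where
  "rr E tail head K S np X i =
     N1 E tail head K S np X i / (N1 E tail head K S np X i + N0 E tail head K S np X i)"

text \<open>Product over children, with the paper's convention that the empty product is 0.\<close>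
definition prodC :: "'a set \<Rightarrow> ('a \<Rightarrow> 'v) \<Rightarrow> ('a \<Rightarrow> 'v) \<Rightarrow> ('a \<Rightarrow> real) \<Rightarrow> 'a \<Rightarrow> real" where
  "prodC E tail head \<xi> i =
     (if children E tail head i = {} then 0 else (\<Prod>j \<in> children E tail head i. \<xi> j))"

definition Xi :: "'a set \<Rightarrow> ('a \<Rightarrow> 'v) \<Rightarrow> ('a \<Rightarrow> 'v) \<Rightarrow> ('a \<Rightarrow> real) set" where
  "Xi E tail head = {\<xi>. (\<forall>i \<in> E. 0 < \<xi> i \<and> \<xi> i < 1) \<and>
     (\<forall>i \<in> E. children E tail head i \<noteq> {} \<longrightarrow> \<xi> i > (\<Prod>j \<in> children E tail head i. \<xi> j))}"

definition loglik :: "'a set \<Rightarrow> ('a \<Rightarrow> 'v) \<Rightarrow> ('a \<Rightarrow> 'v) \<Rightarrow> nat \<Rightarrow> (nat \<Rightarrow> 'a) \<Rightarrow> (nat \<Rightarrow> nat)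
    \<Rightarrow> (nat \<Rightarrow> nat \<Rightarrow> 'a \<Rightarrow> bool) \<Rightarrow> ('a \<Rightarrow> real) \<Rightarrow> real" where
  "loglik E tail head K S np X \<xi> =
     (\<Sum>i \<in> E. N1 E tail head K S np X i * ln ((1 - \<xi> i) / (1 - prodC E tail head \<xi> i))
             + N0 E tail head K S np X i * ln (\<xi> i))"

definition grad_zero :: "'a set \<Rightarrow> (('a \<Rightarrow> real) \<Rightarrow> real) \<Rightarrow> ('a \<Rightarrow> real) \<Rightarrow> bool" where
  "grad_zero E f \<xi> \<longleftrightarrow>
     (\<forall>i \<in> E. ((\<lambda>t. f (\<xi>(i := t))) has_real_derivative 0) (at (\<xi> i)))"

end

theory Submission
  imports Defs
begin


lemma aux1: fixes a x P :: real assumes "x \<noteq> 1" "P \<noteq> 1"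
  shows "(P - 1) * a / ((1 - x) * (1 - P)) = - (a / (1 - x))"
proof -
  have "(P - 1) * a / ((1 - x) * (1 - P)) = ((1-P) * (- a)) / ((1 - P) * (1 - x))" by (simp add: mult.commute algebra_simps)
  also have "\<dots> = (- a) / (1-x)" using assms by (subst mult_divide_mult_cancel_left) auto
  finally show ?thesis by simp
qed


lemma prod_lt1:
  assumes "finite A" "A \<noteq> {}" "\<forall>j\<in>A. 0 < f j \<and> f j < (1::real)"
  shows "(\<Prod>j\<in>A. f j) < 1" "0 < (\<Prod>j\<in>A. f j)"
proof -
  show "0 < (\<Prod>j\<in>A. f j)" using assms by (intro prod_pos) auto
  show "(\<Prod>j\<in>A. f j) < 1" using assms
  proof (induction A rule: finite_ne_induct)
    case (singleton x) then show ?case by auto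
  next
    case (insert x F)
    have "0 < (\<Prod>j\<in>F. f j)" using insert by (intro prod_pos) auto
    moreover have "(\<Prod>j\<in>F. f j) < 1" using insert by auto
    ultimately show ?case using insert using mult_strict_mono[of "f x" 1 "(\<Prod>j\<in>F. f j)" 1] by simp
  qed
qed

lemma prod_le1:
  assumes "finite A" "\<forall>j\<in>A. 0 < f j \<and> f j < (1::real)"
  shows "(\<Prod>j\<in>A. f j) \<le> 1" "0 < (\<Prod>j\<in>A. f j)"
  using assms prod_lt1[of A f] by (cases "A = {}"; auto)+

lemma deriv_term:
  fixes \<xi> :: "'a \<Rightarrow> real"
  assumes fin: "finite E" and iE: "i \<in> E" and qE: "q \<in> E" and xi: "\<xi> \<in> Xi E tail head"
    and nii: "i \<notin> children E tail head i"
  shows "((\<lambda>t. a * ln ((1 - (\<xi>(i:=t)) q) / (1 - prodC E tail head (\<xi>(i:=t)) q)) + b * ln ((\<xi>(i:=t)) q))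
     has_real_derivative
     (if q = i then - a / (1 - \<xi> i) + b / \<xi> i
      else if i \<in> children E tail head q then
        a * (\<Prod>j\<in>children E tail head q - {i}. \<xi> j) / (1 - \<xi> i * (\<Prod>j\<in>children E tail head q - {i}. \<xi> j))
      else 0)) (at (\<xi> i))"
proof -
  have xr: "\<forall>j\<in>E. 0 < \<xi> j \<and> \<xi> j < 1" using xi by (auto simp: Xi_def)
  have chE: "children E tail head q \<subseteq> E" for q by (auto simp: children_def)
  have chf: "finite (children E tail head q)" for q using fin chE finite_subset by blast
  have pc_lt: "prodC E tail head \<xi> q < 1" "0 \<le> prodC E tail head \<xi> q" for q
    using prod_le1[OF chf, of q \<xi>] prod_lt1[OF chf _, of q \<xi>] chE xr unfolding prodC_def by (auto simp: subset_iff)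
  have same: "prodC E tail head (\<xi>(i:=t)) q = prodC E tail head \<xi> q"
    if "i \<notin> children E tail head q" for t q
  proof -
    have "(\<Prod>j\<in>children E tail head q. (\<xi>(i:=t)) j) = (\<Prod>j\<in>children E tail head q. \<xi> j)"
      by (rule prod.cong) (use that in auto)
    then show ?thesis unfolding prodC_def by simp
  qed
  show ?thesis
  proof (cases "q = i")
    case True
    let ?P = "prodC E tail head \<xi> i"
    have eq: "(\<lambda>t. a * ln ((1 - (\<xi>(i:=t)) q) / (1 - prodC E tail head (\<xi>(i:=t)) q)) + b * ln ((\<xi>(i:=t)) q))
      = (\<lambda>t. a * ln ((1 - t) / (1 - ?P)) + b * ln t)" using True same[OF nii] by auto
    have "((\<lambda>t. a * ln ((1 - t) / (1 - ?P)) + b * ln t) has_real_derivative - a / (1 - \<xi> i) + b / \<xi> i) (at (\<xi> i))"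
      using pc_lt[of i] xr iE
      apply (auto intro!: derivative_eq_intros)
      apply (rule aux1) by auto
    then show ?thesis using eq True by simp
  next
    case False
    show ?thesis
    proof (cases "i \<in> children E tail head q")
      case True
      define c where "c = (\<Prod>j\<in>children E tail head q - {i}. \<xi> j)"
      have c01: "0 < c" "c \<le> 1" using prod_le1[of "children E tail head q - {i}" \<xi>] chf chE xr
        unfolding c_def by (auto simp: subset_iff)
      have pe: "prodC E tail head (\<xi>(i:=t)) q = t * c" for t
        using True unfolding prodC_def c_def
        by (auto simp: prod.remove[OF chf True] intro!: prod.cong)
      have eq: "(\<lambda>t. a * ln ((1 - (\<xi>(i:=t)) q) / (1 - prodC E tail head (\<xi>(i:=t)) q)) + b * ln ((\<xi>(i:=t)) q))
        = (\<lambda>t. a * ln ((1 - \<xi> q) / (1 - t * c)) + b * ln (\<xi> q))" using False pe by auto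
      have xic: "\<xi> i * c < 1" proof -
        have "\<xi> i * c \<le> \<xi> i * 1" using c01 xr iE by (intro mult_left_mono) auto
        moreover have "\<xi> i < 1" using xr iE by auto
        ultimately show ?thesis by linarith
      qed
      have "((\<lambda>t. a * ln ((1 - \<xi> q) / (1 - t * c)) + b * ln (\<xi> q)) has_real_derivative
              a * c / (1 - \<xi> i * c)) (at (\<xi> i))"
        using xic xr qE apply (auto intro!: derivative_eq_intros)
      done
      then show ?thesis using eq False True by (simp add: c_def)
    next
      case F2: False
      have eq: "(\<lambda>t. a * ln ((1 - (\<xi>(i:=t)) q) / (1 - prodC E tail head (\<xi>(i:=t)) q)) + b * ln ((\<xi>(i:=t)) q))
        = (\<lambda>t. a * ln ((1 - \<xi> q) / (1 - prodC E tail head \<xi> q)) + b * ln (\<xi> q))" using False same[OF F2] by auto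
      show ?thesis unfolding eq using False F2 by simp
    qed
  qed
qed



lemma hx: fixes N x a p :: real assumes "N \<noteq> 0"
  shows "(x = 1 - a/N + a/N*p) \<longleftrightarrow> x*N = N - a + a*p"
proof -
  have "1 - a/N + a/N*p = (N - a + a*p)/N" using assms by (simp add: field_simps)
  then show ?thesis using nonzero_eq_divide_eq[OF assms, of x "N - a + a*p"] by simp
qed

lemma alg_root:
  fixes x N0 N1 :: real
  assumes "0 < x" "x < 1" "N1 + N0 > 0"
  shows "(- N1 / (1 - x) + N0 / x + 0 = 0) \<longleftrightarrow> x = 1 - N1 / (N1 + N0)"
proof -
  have "(- N1 / (1 - x) + N0 / x + 0 = 0) \<longleftrightarrow> N0 * (1 - x) - N1 * x = 0"
    using assms by (simp add: field_simps)
  also have "\<dots> \<longleftrightarrow> x * (N1 + N0) = N0" by (auto simp: algebra_simps)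
  also have "\<dots> \<longleftrightarrow> x = 1 - N1 / (N1 + N0)"
    using hx[of "N1 + N0" x N1 0] assms by (simp add: algebra_simps)
  finally show ?thesis .
qed

lemma alg_nonroot:
  fixes x c N0 N1 :: real
  assumes "0 < x" "x < 1" "0 < c" "x * c < 1" "N1 + N0 > 0"
  shows "(- N1 / (1 - x) + N0 / x + (N1 + N0) * c / (1 - x * c) = 0) \<longleftrightarrow>
          x = 1 - N1 / (N1 + N0) + N1 / (N1 + N0) * (x * c)"
proof -
  have "(- N1 / (1 - x) + N0 / x + (N1 + N0) * c / (1 - x * c) = 0) \<longleftrightarrow>
        - N1 * x * (1 - x * c) + N0 * (1 - x) * (1 - x * c) + (N1 + N0) * c * x * (1 - x) = 0"
  proof -
    have d: "x * (1 - x) * (1 - x * c) \<noteq> 0" using assms by auto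
    have "(- N1 / (1 - x) + N0 / x + (N1 + N0) * c / (1 - x * c)) * (x * (1 - x) * (1 - x * c)) =
        - N1 * x * (1 - x * c) + N0 * (1 - x) * (1 - x * c) + (N1 + N0) * c * x * (1 - x)"
    proof -
      have a1: "1 - x \<noteq> 0" "x \<noteq> 0" "1 - x * c \<noteq> 0" using assms by auto
      have "(- N1 / (1 - x)) * (x * (1 - x) * (1 - x * c)) = - N1 * x * (1 - x * c)" using a1 by simp
      moreover have "(N0 / x) * (x * (1 - x) * (1 - x * c)) = N0 * (1 - x) * (1 - x * c)" using a1 by simp
      moreover have "((N1 + N0) * c / (1 - x * c)) * (x * (1 - x) * (1 - x * c)) = (N1 + N0) * c * x * (1 - x)" using a1 by simp
      moreover have dd: "(a + b + e) * d = a*d + b*d + e*d" for a b e d :: real by (simp add: algebra_simps)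
      ultimately show ?thesis by metis
    qed
    then show ?thesis using d by (metis mult_eq_0_iff)
  qed
  also have "\<dots> \<longleftrightarrow> N0 * (1 - x) - N1 * (x - x * c) = 0"
  proof -
    have "- N1 * x * (1 - x * c) + N0 * (1 - x) * (1 - x * c) + (N1 + N0) * c * x * (1 - x) = N0 * (1 - x) - N1 * (x - x * c)"
      by (simp add: algebra_simps)
    then show ?thesis by simp
  qed
  also have "\<dots> \<longleftrightarrow> x * (N1 + N0) = N0 + N1 * (x * c)" by (auto simp: algebra_simps)
  also have "\<dots> \<longleftrightarrow> x = 1 - N1 / (N1 + N0) + N1 / (N1 + N0) * (x * c)"
    using hx[of "N1 + N0" x N1 "x * c"] assms by (simp add: algebra_simps)
  finally show ?thesis .
qed



lemma ch_par: "q \<in> E \<Longrightarrow> i \<in> children E tail head q \<longleftrightarrow> q \<in> parents E tail head i \<and> i \<in> E"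
  by (auto simp: children_def parents_def)

lemma ch_eq_br: "q \<in> parents E tail head i \<Longrightarrow> children E tail head q = brothers E tail i"
  by (auto simp: children_def parents_def brothers_def)

lemma deriv_loglik:
  fixes \<xi> :: "'a \<Rightarrow> real"
  assumes fin: "finite E" and iE: "i \<in> E" and xi: "\<xi> \<in> Xi E tail head"
    and nii: "i \<notin> children E tail head i"
  shows "((\<lambda>t. loglik E tail head K S np X (\<xi>(i:=t))) has_real_derivative
     (- N1 E tail head K S np X i / (1 - \<xi> i) + N0 E tail head K S np X i / \<xi> i
      + (\<Sum>q\<in>parents E tail head i. N1 E tail head K S np X q) * (\<Prod>j\<in>brothers E tail i - {i}. \<xi> j)
         / (1 - \<xi> i * (\<Prod>j\<in>brothers E tail i - {i}. \<xi> j)))) (at (\<xi> i))"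
proof -
  define c where "c = (\<Prod>j\<in>brothers E tail i - {i}. \<xi> j)"
  let ?n1 = "N1 E tail head K S np X" and ?n0 = "N0 E tail head K S np X"
  let ?d = "\<lambda>q. (if q = i then - ?n1 q / (1 - \<xi> i) + ?n0 q / \<xi> i
      else if i \<in> children E tail head q then
        ?n1 q * (\<Prod>j\<in>children E tail head q - {i}. \<xi> j) / (1 - \<xi> i * (\<Prod>j\<in>children E tail head q - {i}. \<xi> j))
      else 0)"
  have d: "((\<lambda>t. loglik E tail head K S np X (\<xi>(i:=t))) has_real_derivative (\<Sum>q\<in>E. ?d q)) (at (\<xi> i))"
    unfolding loglik_def
    by (rule DERIV_sum) (rule deriv_term[OF fin iE _ xi nii])
  have "(\<Sum>q\<in>E. ?d q) = ?d i + (\<Sum>q\<in>E - {i}. ?d q)" using fin iE by (simp add: sum.remove)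
  also have "(\<Sum>q\<in>E - {i}. ?d q) = (\<Sum>q\<in>E - {i}. if i \<in> children E tail head q then ?n1 q * c / (1 - \<xi> i * c) else 0)"
    by (rule sum.cong) (auto simp: c_def ch_eq_br ch_par)
  also have "\<dots> = (\<Sum>q\<in>{q\<in>E - {i}. i \<in> children E tail head q}. ?n1 q * c / (1 - \<xi> i * c))"
    by (subst sum.inter_filter) (use fin in auto)
  also have "{q\<in>E - {i}. i \<in> children E tail head q} = parents E tail head i"
    using nii iE by (auto simp: children_def parents_def)
  also have "(\<Sum>q\<in>parents E tail head i. ?n1 q * c / (1 - \<xi> i * c)) = (\<Sum>q\<in>parents E tail head i. ?n1 q) * c / (1 - \<xi> i * c)"
    by (simp add: sum_distrib_right sum_divide_distrib)
  finally show ?thesis using d by (simp add: c_def)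
qed



lemma net_fin: "multicast_cover E tail head K S \<Longrightarrow> finite E"
  unfolding multicast_cover_def by (elim conjE)

lemma net_nii: assumes "multicast_cover E tail head K S" "i \<in> E"
  shows "i \<notin> children E tail head i"
proof
  assume "i \<in> children E tail head i"
  then have "(i, i) \<in> child_rel E tail head" using assms(2) by (simp add: child_rel_def)
  moreover have "acyclic (child_rel E tail head)" using assms(1) unfolding multicast_cover_def by (elim conjE)
  ultimately show False unfolding acyclic_def by blast
qed

lemma net_root_par: assumes "multicast_cover E tail head K S" "k \<in> {1..K}" shows "parents E tail head (S k) = {}"
proof -
  have "\<forall>k \<in> {1..K}. S k \<in> E \<and> parents E tail head (S k) = {}"
    using assms(1) unfolding multicast_cover_def by (elim conjE)
  then show ?thesis using assms(2) by blast
qed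

lemma tl_closed: "q \<in> tree_links E tail head S k \<Longrightarrow> q \<in> E \<Longrightarrow> i \<in> children E tail head q
   \<Longrightarrow> i \<in> tree_links E tail head S k"
  unfolding tree_links_def by (auto simp: child_rel_def intro: rtrancl_into_rtrancl)

lemma par_fin: "finite E \<Longrightarrow> finite (parents E tail head i)"
  by (simp add: parents_def)

lemma nonroot_unique_par:
  assumes net: "multicast_cover E tail head K S" and iE: "i \<in> E" and nr: "i \<notin> S ` {1..K}"
    and k: "k \<in> {1..K}" and itl: "i \<in> tree_links E tail head S k"
  shows "\<exists>!p. p \<in> parents E tail head i \<inter> tree_links E tail head S k"
proof -
  have "i \<noteq> S k" using nr k by auto
  moreover have "\<forall>k \<in> {1..K}. \<forall>i \<in> tree_links E tail head S k - {S k}.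
        \<exists>!p. p \<in> parents E tail head i \<inter> tree_links E tail head S k"
    using net unfolding multicast_cover_def by (elim conjE)
  ultimately show ?thesis using k itl by simp
qed

lemma nonroot_par_ne:
  assumes net: "multicast_cover E tail head K S" and iE: "i \<in> E" and nr: "i \<notin> S ` {1..K}"
  shows "parents E tail head i \<noteq> {}"
proof -
  have "\<forall>i \<in> E. \<exists>k \<in> {1..K}. i \<in> tree_links E tail head S k"
    using net unfolding multicast_cover_def by (elim conjE)
  then obtain k where k: "k \<in> {1..K}" "i \<in> tree_links E tail head S k"
    using iE by blast
  then show ?thesis using nonroot_unique_par[OF net iE nr k] by auto
qed

lemma sum_par:
  assumes net: "multicast_cover E tail head K S" and iE: "i \<in> E" and nr: "i \<notin> S ` {1..K}"
  shows "(\<Sum>q\<in>parents E tail head i. N1 E tail head K S np X q)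
         = N1 E tail head K S np X i + N0 E tail head K S np X i"
proof -
  have fin: "finite E" using net by (rule net_fin)
  let ?P = "parents E tail head i"
  let ?T = "tree_links E tail head S"
  have PE: "?P \<subseteq> E" by (auto simp: parents_def)
  have ich: "q \<in> ?P \<Longrightarrow> i \<in> children E tail head q" for q using iE by (auto simp: parents_def children_def)
  have "(\<Sum>q\<in>?P. N1 E tail head K S np X q) = (\<Sum>k\<in>{1..K}. \<Sum>q\<in>?P. cnt1 E tail head S np X k q)"
    unfolding N1_def by (rule sum.swap)
  also have "\<dots> = (\<Sum>k\<in>{1..K}. cnt1 E tail head S np X k i + cnt0 E tail head S np X k i)"
  proof (rule sum.cong[OF refl])
    fix k assume k: "k \<in> {1..K}"
    show "(\<Sum>q\<in>?P. cnt1 E tail head S np X k q) = cnt1 E tail head S np X k i + cnt0 E tail head S np X k i"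
    proof (cases "i \<in> ?T k")
      case False
      have "q \<notin> ?T k" if "q \<in> ?P" for q
      proof
        assume qT: "q \<in> ?T k"
        have qE: "q \<in> E" using that by (simp add: parents_def)
        have "i \<in> ?T k" by (rule tl_closed[OF qT qE ich[OF that]])
        then show False using False by simp
      qed
      then have "(\<Sum>q\<in>?P. cnt1 E tail head S np X k q) = 0" by (simp add: cnt1_def)
      then show ?thesis using False by (simp add: cnt1_def cnt0_def)
    next
      case True
      have ne: "i \<noteq> S k" using nr k by auto
      obtain p where p: "p \<in> ?P \<inter> ?T k" and pu: "\<And>q. q \<in> ?P \<inter> ?T k \<Longrightarrow> q = p"
        using nonroot_unique_par[OF net iE nr k True] by blast
      have tp: "tree_parent E tail head S k i = p"
        unfolding tree_parent_def by (rule the_equality[where P="\<lambda>x. x \<in> ?P \<inter> ?T k", OF p]) (rule pu)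
      have "(\<Sum>q\<in>?P. cnt1 E tail head S np X k q) = cnt1 E tail head S np X k p + (\<Sum>q\<in>?P - {p}. cnt1 E tail head S np X k q)"
        using p by (intro sum.remove[OF par_fin[OF fin]]) blast
      also have "(\<Sum>q\<in>?P - {p}. cnt1 E tail head S np X k q) = 0"
      proof (rule sum.neutral, rule ballI)
        fix q assume q: "q \<in> ?P - {p}"
        have "q \<notin> ?T k"
        proof
          assume qT: "q \<in> ?T k"
          have "q \<in> ?P \<inter> ?T k" using q qT by simp
          then have "q = p" by (rule pu)
          then show False using q by simp
        qed
        then show "cnt1 E tail head S np X k q = 0" by (simp add: cnt1_def)
      qed
      finally show ?thesis unfolding cnt0_def using True ne tp by simp
    qed
  qed
  also have "\<dots> = N1 E tail head K S np X i + N0 E tail head K S np X i"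
    unfolding N1_def N0_def by (simp add: sum.distrib)
  finally show ?thesis .
qed

lemma bro_nonroot:
  assumes net: "multicast_cover E tail head K S" and iE: "i \<in> E" and nr: "i \<notin> S ` {1..K}"
    and j: "j \<in> brothers E tail i"
  shows "j \<in> E" "j \<notin> S ` {1..K}" "brothers E tail j = brothers E tail i"
proof -
  show "j \<in> E" using j by (simp add: brothers_def)
  show "brothers E tail j = brothers E tail i" using j by (auto simp: brothers_def)
  have "parents E tail head j = parents E tail head i" using j by (auto simp: brothers_def parents_def)
  then show "j \<notin> S ` {1..K}"
  proof (intro notI)
    assume pe: "parents E tail head j = parents E tail head i" and "j \<in> S ` {1..K}"
    then obtain l where l: "l \<in> {1..K}" "j = S l" by (elim imageE)
    have "parents E tail head j = {}" using net_root_par[OF net l(1)] l(2) by simp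
    then show False using pe nonroot_par_ne[OF net iE nr] by simp
  qed
qed



lemma net_root_E: assumes "multicast_cover E tail head K S" "k \<in> {1..K}" shows "S k \<in> E"
proof -
  have "\<forall>k \<in> {1..K}. S k \<in> E \<and> parents E tail head (S k) = {}"
    using assms(1) unfolding multicast_cover_def by (elim conjE)
  then show ?thesis using assms(2) by blast
qed

definition Dgrad where
  "Dgrad E tail head K S np X \<xi> i =
     (- N1 E tail head K S np X i / (1 - \<xi> i) + N0 E tail head K S np X i / \<xi> i
      + (\<Sum>q\<in>parents E tail head i. N1 E tail head K S np X q) * (\<Prod>j\<in>brothers E tail i - {i}. \<xi> j)
         / (1 - \<xi> i * (\<Prod>j\<in>brothers E tail i - {i}. \<xi> j)))"

lemma gz_iff:
  assumes net: "multicast_cover E tail head K S" and xi: "\<xi> \<in> Xi E tail head"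
  shows "grad_zero E (loglik E tail head K S np X) \<xi> \<longleftrightarrow> (\<forall>i\<in>E. Dgrad E tail head K S np X \<xi> i = 0)"
proof -
  have d: "((\<lambda>t. loglik E tail head K S np X (\<xi>(i:=t))) has_real_derivative Dgrad E tail head K S np X \<xi> i) (at (\<xi> i))"
    if "i \<in> E" for i
    unfolding Dgrad_def by (rule deriv_loglik[OF net_fin[OF net] that xi net_nii[OF net that]])
  show ?thesis unfolding grad_zero_def
    using d DERIV_unique by metis
qed

lemma per_i:
  assumes net: "multicast_cover E tail head K S" and xi: "\<xi> \<in> Xi E tail head"
    and pos: "\<forall>i \<in> E. N1 E tail head K S np X i + N0 E tail head K S np X i > 0"
    and iE: "i \<in> E"
  shows "Dgrad E tail head K S np X \<xi> i = 0 \<longleftrightarrow>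
    \<xi> i = (1 - rr E tail head K S np X i)
                 + rr E tail head K S np X i * (if i \<notin> S ` {1..K} then 1 else 0)
                   * (\<Prod>j \<in> brothers E tail i. \<xi> j)"
proof -
  have fin: "finite E" by (rule net_fin[OF net])
  let ?n1 = "N1 E tail head K S np X i" and ?n0 = "N0 E tail head K S np X i"
  define c where "c = (\<Prod>j\<in>brothers E tail i - {i}. \<xi> j)"
  define x where "x = \<xi> i"
  have xr: "\<forall>j\<in>E. 0 < \<xi> j \<and> \<xi> j < 1" using xi by (auto simp: Xi_def)
  have bfin: "finite (brothers E tail i)" using fin by (simp add: brothers_def)
  have ib: "i \<in> brothers E tail i" using iE by (simp add: brothers_def)
  have bE: "brothers E tail i \<subseteq> E" by (auto simp: brothers_def)
  have c01: "0 < c" "c \<le> 1" using prod_le1[of "brothers E tail i - {i}" \<xi>] bfin bE xr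
    unfolding c_def by (auto simp: subset_iff)
  have x01: "0 < x" "x < 1" using xr iE x_def by auto
  have xc: "x * c < 1"
  proof -
    have "x * c \<le> x * 1" using c01 x01 by (intro mult_left_mono) auto
    then show ?thesis using x01 by linarith
  qed
  have pb: "(\<Prod>j \<in> brothers E tail i. \<xi> j) = x * c"
    unfolding x_def c_def by (rule prod.remove[OF bfin ib])
  have rr: "rr E tail head K S np X i = ?n1 / (?n1 + ?n0)" by (simp add: rr_def)
  have p: "?n1 + ?n0 > 0" using pos iE by blast
  show ?thesis
  proof (cases "i \<in> S ` {1..K}")
    case True
    then obtain k where k: "k \<in> {1..K}" "i = S k" by blast
    have "parents E tail head i = {}" using net_root_par[OF net k(1)] k(2) by simp
    then have "Dgrad E tail head K S np X \<xi> i = - ?n1 / (1 - x) + ?n0 / x + 0"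
      unfolding Dgrad_def x_def by simp
    then show ?thesis using alg_root[OF x01 p] True rr x_def by simp
  next
    case False
    have "Dgrad E tail head K S np X \<xi> i = - ?n1 / (1 - x) + ?n0 / x + (?n1 + ?n0) * c / (1 - x * c)"
      unfolding Dgrad_def x_def c_def sum_par[OF net iE False] by simp
    then show ?thesis using alg_nonroot[OF x01 c01(1) xc p] False rr x_def pb by simp
  qed
qed


theorem mainTheorem6:
  fixes E :: "'a set" and tail head :: "'a \<Rightarrow> 'v" and K :: nat and S :: "nat \<Rightarrow> 'a"
    and np :: "nat \<Rightarrow> nat" and X :: "nat \<Rightarrow> nat \<Rightarrow> 'a \<Rightarrow> bool" and \<xi> :: "'a \<Rightarrow> real"
  assumes net: "multicast_cover E tail head K S"
    and pos: "\<forall>i \<in> E. N1 E tail head K S np X i + N0 E tail head K S np X i > 0"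
    and xi: "\<xi> \<in> Xi E tail head"
  shows "(grad_zero E (loglik E tail head K S np X) \<xi> \<longleftrightarrow>
            (\<forall>i \<in> E. \<xi> i = (1 - rr E tail head K S np X i)
                 + rr E tail head K S np X i * (if i \<notin> S ` {1..K} then 1 else 0)
                   * (\<Prod>j \<in> brothers E tail i. \<xi> j)))
       \<and> (grad_zero E (loglik E tail head K S np X) \<xi> \<longrightarrow>
            (\<forall>k \<in> {1..K}. \<xi> (S k) = 1 - rr E tail head K S np X (S k))
          \<and> (\<forall>i \<in> E - S ` {1..K}.
               (\<Prod>j \<in> brothers E tail i. \<xi> j) =
               (\<Prod>j \<in> brothers E tail i. (1 - rr E tail head K S np X j)
                   + rr E tail head K S np X j * (\<Prod>l \<in> brothers E tail i. \<xi> l))))"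
proof -
  let ?eq = "\<lambda>i. \<xi> i = (1 - rr E tail head K S np X i)
                 + rr E tail head K S np X i * (if i \<notin> S ` {1..K} then 1 else 0)
                   * (\<Prod>j \<in> brothers E tail i. \<xi> j)"
  have A: "grad_zero E (loglik E tail head K S np X) \<xi> \<longleftrightarrow> (\<forall>i \<in> E. ?eq i)"
    using gz_iff[OF net xi] per_i[OF net xi pos] by auto
  have B: "(\<forall>k \<in> {1..K}. \<xi> (S k) = 1 - rr E tail head K S np X (S k))
          \<and> (\<forall>i \<in> E - S ` {1..K}.
               (\<Prod>j \<in> brothers E tail i. \<xi> j) =
               (\<Prod>j \<in> brothers E tail i. (1 - rr E tail head K S np X j)
                   + rr E tail head K S np X j * (\<Prod>l \<in> brothers E tail i. \<xi> l)))"
    if all: "\<forall>i \<in> E. ?eq i"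
  proof
    show "\<forall>k \<in> {1..K}. \<xi> (S k) = 1 - rr E tail head K S np X (S k)"
    proof
      fix k assume k: "k \<in> {1..K}"
      have "?eq (S k)" using all net_root_E[OF net k] by blast
      then show "\<xi> (S k) = 1 - rr E tail head K S np X (S k)" using k by simp
    qed
    show "\<forall>i \<in> E - S ` {1..K}.
               (\<Prod>j \<in> brothers E tail i. \<xi> j) =
               (\<Prod>j \<in> brothers E tail i. (1 - rr E tail head K S np X j)
                   + rr E tail head K S np X j * (\<Prod>l \<in> brothers E tail i. \<xi> l))"
    proof
      fix i assume i: "i \<in> E - S ` {1..K}"
      then have iE: "i \<in> E" and nr: "i \<notin> S ` {1..K}" by auto
      show "(\<Prod>j \<in> brothers E tail i. \<xi> j) =
               (\<Prod>j \<in> brothers E tail i. (1 - rr E tail head K S np X j)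
                   + rr E tail head K S np X j * (\<Prod>l \<in> brothers E tail i. \<xi> l))"
      proof (rule prod.cong[OF refl])
        fix j assume j: "j \<in> brothers E tail i"
        have jE: "j \<in> E" and jn: "j \<notin> S ` {1..K}" and bj: "brothers E tail j = brothers E tail i"
          using bro_nonroot[OF net iE nr j] by auto
        have "?eq j" using all jE by blast
        then show "\<xi> j = (1 - rr E tail head K S np X j)
                   + rr E tail head K S np X j * (\<Prod>l \<in> brothers E tail i. \<xi> l)"
          using jn bj by simp
      qed
    qed
  qed
  show ?thesis using A B by blast
qed

end
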